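(* Let $\theta_\ast>0$ and consider the Poisson mixture model in which $X_1,\dots,X_n$ are i.i.d. with probability mass function $h_Q(x)=\int_0^{\theta_\ast}\frac{e^{-\theta}\theta^x}{x!}\,\mathrm dQ(\theta)$, $x\in\mathbb Z^{\ge0}$, with $Q\in\mathcal P([0,\theta_\ast])$. Let $\epsilon(n)=\log\log n/\log n$. Then there exists a constant $C>0$ such that for all sufficiently large $n$ and every $\delta\in(0,1)$, $$\chi^2(h^{\rm obs}\Vert h_Q)\le Cn^{-1}(\log n)^{\theta_\ast+4}\delta^{-1-\epsilon(n)}$$ holds with probability at least $1-\delta$.
   Context: $\mathcal P([0,\theta_\ast])$ is the set of probability measures on $[0,\theta_\ast]$. The empirical distribution is $h^{\rm obs}(x)=\frac1n\sum_{i=1}^n\mathbf 1(X_i=x)$, and $\chi^2(p\Vert q)=\sum_{x\ge0}(p(x)-q(x))^2/q(x)$. *)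

theory Defs
  imports "HOL-Probability.Probability"
begin

definition poisson_mix :: "real measure \<Rightarrow> nat \<Rightarrow> real" where
  "poisson_mix Q x = (\<integral>t. exp (- t) * t ^ x / fact x \<partial>Q)"

text \<open>The mixture as a pmf (a genuine pmf whenever Q is a probability measure on [0, theta]).\<close>
definition poisson_mix_pmf :: "real measure \<Rightarrow> nat pmf" where
  "poisson_mix_pmf Q = embed_pmf (poisson_mix Q)"

definition h_obs :: "nat \<Rightarrow> (nat \<Rightarrow> nat) \<Rightarrow> nat \<Rightarrow> real" where
  "h_obs n X x = real (card {i. i < n \<and> X i = x}) / real n"

definition chi2 :: "(nat \<Rightarrow> real) \<Rightarrow> (nat \<Rightarrow> real) \<Rightarrow> ennreal" where
  "chi2 p q = (\<Sum>x. if q x = 0 then (if p x = 0 then 0 else \<top>)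
                    else ennreal ((p x - q x)^2 / q x))"

end

theory Submission
  imports Defs
begin


definition pf :: "nat \<Rightarrow> real \<Rightarrow> real" where
  "pf x t = exp (- t) * t ^ x / fact x"

lemma pf_meas[measurable]: "pf x \<in> borel_measurable borel"
  unfolding pf_def by measurable

lemma mix_facts:
  fixes \<theta> :: real
  assumes Q: "prob_space Q" "sets Q = sets borel" "emeasure Q {0..\<theta>} = 1" and th: "0 < \<theta>"
  shows "AE t in Q. 0 \<le> t \<and> t \<le> \<theta>"
    and "\<And>x. 0 \<le> poisson_mix Q x"
    and "\<And>x. ennreal (poisson_mix Q x) = (\<integral>\<^sup>+ t. ennreal (pf x t) \<partial>Q)"
    and "\<And>x. poisson_mix Q x \<le> \<theta> ^ x / fact x"
    and "(\<integral>\<^sup>+ x. ennreal (poisson_mix Q x) \<partial>count_space UNIV) = 1"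
    and "pmf (poisson_mix_pmf Q) = poisson_mix Q"
proof -
  interpret prob_space Q by fact
  have measQ: "\<And>x. pf x \<in> borel_measurable Q"
    using measurable_cong_sets[OF Q(2) refl] pf_meas by blast
  have "prob {0..\<theta>} = 1" using Q(3) by (simp add: emeasure_eq_measure)
  hence AE1: "AE t in Q. t \<in> {0..\<theta>}" by (rule AE_prob_1)
  thus AE: "AE t in Q. 0 \<le> t \<and> t \<le> \<theta>" by simp
  have pfnn: "AE t in Q. 0 \<le> pf x t" for x
    using AE by eventually_elim (auto simp: pf_def)
  have pm: "poisson_mix Q x = integral\<^sup>L Q (pf x)" for x
    unfolding poisson_mix_def pf_def ..
  have eqnn: "poisson_mix Q x = enn2real (\<integral>\<^sup>+ t. ennreal (pf x t) \<partial>Q)" for x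
    unfolding pm by (rule integral_eq_nn_integral[OF measQ pfnn])
  have bnd: "(\<integral>\<^sup>+ t. ennreal (pf x t) \<partial>Q) \<le> ennreal (\<theta> ^ x / fact x)" for x
  proof -
    have "(\<integral>\<^sup>+ t. ennreal (pf x t) \<partial>Q) \<le> (\<integral>\<^sup>+ t. ennreal (\<theta> ^ x / fact x) \<partial>Q)"
    proof (rule nn_integral_mono_AE)
      show "AE t in Q. ennreal (pf x t) \<le> ennreal (\<theta> ^ x / fact x)"
        using AE
      proof eventually_elim
        case (elim t)
        have "exp (- t) * t ^ x \<le> 1 * \<theta> ^ x"
          using elim by (intro mult_mono power_mono) auto
        thus ?case unfolding pf_def
          by (intro ennreal_leI divide_right_mono) auto
      qed
    qed
    also have "\<dots> = ennreal (\<theta> ^ x / fact x)" by (simp add: emeasure_space_1)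
    finally show ?thesis .
  qed
  show nn: "0 \<le> poisson_mix Q x" for x unfolding eqnn by simp
  show eq: "ennreal (poisson_mix Q x) = (\<integral>\<^sup>+ t. ennreal (pf x t) \<partial>Q)" for x
    unfolding eqnn using bnd[of x] by (simp add: less_top[symmetric] top_unique ennreal_enn2real_if)
       (metis ennreal_neq_top neq_top_trans)
  show "poisson_mix Q x \<le> \<theta> ^ x / fact x" for x
  proof -
    have "ennreal (poisson_mix Q x) \<le> ennreal (\<theta> ^ x / fact x)" using eq bnd by simp
    thus ?thesis using th by simp
  qed
  have sum1: "(\<Sum>x. ennreal (pf x t)) = 1" if "0 \<le> t" for t
  proof -
    have "(\<lambda>x. exp (- t) * (t ^ x / fact x)) sums (exp (- t) * exp t)"
      using exp_converges[of t] by (intro sums_mult) (simp add: field_simps)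
    hence s: "(\<lambda>x. pf x t) sums 1" by (simp add: pf_def exp_minus field_simps)
    have "(\<Sum>x. ennreal (pf x t)) = ennreal (\<Sum>x. pf x t)"
      using s that by (intro suminf_ennreal2) (auto simp: pf_def sums_summable)
    also have "\<dots> = 1" using s sums_unique by (metis ennreal_1)
    finally show ?thesis .
  qed
  show tot: "(\<integral>\<^sup>+ x. ennreal (poisson_mix Q x) \<partial>count_space UNIV) = 1"
  proof -
    have "(\<integral>\<^sup>+ x. ennreal (poisson_mix Q x) \<partial>count_space UNIV) = (\<Sum>x. \<integral>\<^sup>+ t. ennreal (pf x t) \<partial>Q)"
      by (simp add: nn_integral_count_space_nat eq)
    also have "\<dots> = (\<integral>\<^sup>+ t. (\<Sum>x. ennreal (pf x t)) \<partial>Q)"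
      by (rule nn_integral_suminf[symmetric]) (use measQ in measurable)
    also have "\<dots> = (\<integral>\<^sup>+ t. 1 \<partial>Q)"
      by (rule nn_integral_cong_AE) (use AE in \<open>eventually_elim, simp add: sum1\<close>)
    also have "\<dots> = 1" by (simp add: emeasure_space_1)
    finally show ?thesis .
  qed
  show "pmf (poisson_mix_pmf Q) = poisson_mix Q"
    unfolding poisson_mix_pmf_def using nn tot by (intro ext pmf_embed_pmf) auto
qed


lemma pow_fact_le_exp: "0 \<le> (y::real) \<Longrightarrow> y ^ x / fact x \<le> exp y"
proof -
  assume y: "0 \<le> y"
  have "(\<Sum>n\<in>{x}. y ^ n / fact n) \<le> (\<Sum>n. y ^ n / fact n)"
    using summable_exp_generic[of y] y
    by (intro sum_le_suminf) (auto simp: divide_inverse ac_simps)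
  also have "\<dots> = exp y" using exp_converges[of y] sums_unique
    by (metis (no_types, lifting) divide_inverse mult.commute real_scaleR_def sums_cong)
  finally show ?thesis by simp
qed

lemma tail_bound:
  fixes p :: "nat pmf" and \<theta> :: real
  assumes th: "0 < \<theta>" and hb: "\<And>x. pmf p x \<le> \<theta> ^ x / fact x"
  shows "measure_pmf.prob p {K..} \<le> 2 * exp (exp 2 * \<theta>) * exp (- real K)"
proof -
  define B where "B = exp (exp 2 * \<theta>)"
  have trm: "pmf p x * indicator {K..} x \<le> B * exp (- real K) * exp (-1) ^ x" for x
  proof (cases "K \<le> x")
    case True
    have "pmf p x \<le> \<theta> ^ x / fact x" by (rule hb)
    also have "\<theta> ^ x / fact x = (exp 2 * \<theta>) ^ x / fact x * exp (-2) ^ x"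
      by (simp add: power_mult_distrib field_simps exp_minus power_divide)
    also have "\<dots> \<le> B * exp (-2) ^ x"
      unfolding B_def using th by (intro mult_right_mono pow_fact_le_exp) auto
    also have "exp (-2) ^ x = exp (- real x) * exp (-1) ^ x"
      by (simp only: exp_of_nat_mult[symmetric] exp_add[symmetric]) simp
    also have "B * (exp (- real x) * exp (-1) ^ x) \<le> B * (exp (- real K) * exp (-1) ^ x)"
      using True unfolding B_def by (intro mult_left_mono mult_right_mono) auto
    finally show ?thesis using True by simp
  next
    case False
    thus ?thesis unfolding B_def by simp
  qed
  have e1: "exp (-1::real) < 1" by simp
  have ennreal_eq: "ennreal (measure_pmf.prob p {K..}) = (\<Sum>x. ennreal (pmf p x * indicator {K..} x))"
  proof -
    have "ennreal (measure_pmf.prob p {K..}) = emeasure (measure_pmf p) {K..}"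
      by (simp add: measure_pmf.emeasure_eq_measure)
    also have "\<dots> = (\<integral>\<^sup>+ x. indicator {K..} x \<partial>measure_pmf p)" by simp
    also have "\<dots> = (\<integral>\<^sup>+ x. ennreal (pmf p x) * indicator {K..} x \<partial>count_space UNIV)"
      by (rule nn_integral_measure_pmf)
    also have "\<dots> = (\<Sum>x. ennreal (pmf p x * indicator {K..} x))"
      by (simp add: nn_integral_count_space_nat ennreal_mult' ennreal_indicator)
    finally show ?thesis .
  qed
  also have "\<dots> \<le> (\<Sum>x. ennreal (B * exp (- real K) * exp (-1) ^ x))"
    by (intro suminf_le summableI ennreal_leI trm)
  also have "\<dots> = ennreal (\<Sum>x. B * exp (- real K) * exp (-1) ^ x)"
    using e1 by (intro suminf_ennreal2 summable_mult summable_geometric) (auto simp: B_def)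
  also have "(\<Sum>x. B * exp (- real K) * exp (-1) ^ x) = B * exp (- real K) * (1 / (1 - exp (-1)))"
    using e1 by (subst suminf_mult) (auto intro!: summable_geometric simp: suminf_geometric)
  also have "ennreal (B * exp (- real K) * (1 / (1 - exp (-1)))) \<le> ennreal (B * exp (- real K) * 2)"
  proof (rule ennreal_leI)
    have "exp (-1::real) \<le> 1/2"
      using exp_ge_add_one_self[of 1] by (simp add: exp_minus field_simps)
    hence "1 / (1 - exp (-1::real)) \<le> 2" using e1 by (simp add: field_simps)
    thus "B * exp (- real K) * (1 / (1 - exp (-1))) \<le> B * exp (- real K) * 2"
      unfolding B_def by (intro mult_left_mono) auto
  qed
  finally have "ennreal (measure_pmf.prob p {K..}) \<le> ennreal (B * exp (- real K) * 2)" .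
  hence "measure_pmf.prob p {K..} \<le> B * exp (- real K) * 2"
    by (subst (asm) ennreal_le_iff) (auto simp: B_def)
  thus ?thesis unfolding B_def by (simp add: mult_ac)
qed



lemma pmf_integrable_bounded:
  fixes f :: "'a \<Rightarrow> real"
  assumes "\<And>x. \<bar>f x\<bar> \<le> B"
  shows "integrable (measure_pmf M) f"
  by (rule measure_pmf.integrable_const_bound[where B=B]) (use assms in auto)

lemma h_obs_sum:
  "h_obs n X y = (\<Sum>i<n. indicator {X. X i = y} X) / real n"
proof -
  have "(\<Sum>i<n. indicator {X. X i = y} X :: real) = (\<Sum>i<n. indicator {i. X i = y} i)"
    by (simp add: indicator_def)
  also have "\<dots> = real (card ({..<n} \<inter> {i. X i = y}))"
    by (simp add: indicator_def sum.If_cases)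
  also have "{..<n} \<inter> {i. X i = y} = {i. i < n \<and> X i = y}" by auto
  finally show ?thesis unfolding h_obs_def by simp
qed

lemma prob_one:
  fixes p :: "nat pmf" and y :: nat and i j n :: nat
  assumes "i < n"
  shows "measure_pmf.prob (Pi_pmf {..<n} 0 (\<lambda>_. p)) {X. X i = y} = pmf p y"
proof -
  have "measure_pmf.prob (Pi_pmf {..<n} 0 (\<lambda>_. p)) {X. X i = y}
      = measure_pmf.prob (map_pmf (\<lambda>f. f i) (Pi_pmf {..<n} 0 (\<lambda>_. p))) {y}"
    by (simp add: vimage_def)
  also have "map_pmf (\<lambda>f. f i) (Pi_pmf {..<n} 0 (\<lambda>_. p)) = p"
    using assms by (simp add: Pi_pmf_component)
  finally show ?thesis by (simp add: measure_pmf_single)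
qed

lemma prob_two:
  fixes p :: "nat pmf" and y :: nat and i j n :: nat
  assumes "i < n" "j < n" "i \<noteq> j"
  shows "measure_pmf.prob (Pi_pmf {..<n} 0 (\<lambda>_. p)) {X. X i = y \<and> X j = y} = pmf p y ^ 2"
proof -
  define B where "B = (\<lambda>k. if k = i \<or> k = j then {y} else UNIV)"
  have eqs: "{X. X i = y \<and> X j = y} = Pi {..<n} B"
    using assms unfolding B_def by (auto simp: Pi_def)
  have "measure_pmf.prob (Pi_pmf {..<n} 0 (\<lambda>_. p)) {X. X i = y \<and> X j = y}
     = (\<Prod>k<n. measure_pmf.prob p (B k))"
    unfolding eqs by (rule measure_Pi_pmf_Pi) simp
  also have "\<dots> = (\<Prod>k<n. if k \<in> {i, j} then pmf p y else 1)"
    by (intro prod.cong) (auto simp: B_def measure_pmf_single)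
  also have "\<dots> = (\<Prod>k\<in>{..<n} \<inter> {k. k\<in>{i,j}}. pmf p y) * (\<Prod>k\<in>{..<n} \<inter> - {k. k\<in>{i,j}}. 1)"
    by (rule prod.If_cases) simp
  also have "\<dots> = pmf p y ^ 2"
  proof -
    have "{..<n} \<inter> {k. k\<in>{i,j}} = {i,j}" using assms by auto
    thus ?thesis using assms by (simp add: power2_eq_square)
  qed
  finally show ?thesis .
qed

lemma var_hobs:
  fixes p :: "nat pmf" and n :: nat and y :: nat
  assumes n: "n > 0"
  shows "measure_pmf.expectation (Pi_pmf {..<n} 0 (\<lambda>_. p)) (\<lambda>X. (h_obs n X y - pmf p y)^2)
     = pmf p y * (1 - pmf p y) / n"
proof -
  define P where "P = Pi_pmf {..<n} 0 (\<lambda>_. p)"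
  define h where "h = pmf p y"
  define ind where "ind = (\<lambda>(i::nat) (X::nat\<Rightarrow>nat). indicator {X. X i = y} X :: real)"
  have intb: "integrable (measure_pmf P) (\<lambda>X. ind i X * ind j X)" for i j
    by (rule pmf_integrable_bounded[where B=1]) (auto simp: ind_def indicator_def)
  have intb1: "integrable (measure_pmf P) (\<lambda>X. ind i X)" for i
    by (rule pmf_integrable_bounded[where B=1]) (auto simp: ind_def indicator_def)
  have E1: "measure_pmf.expectation P (ind i) = h" if "i < n" for i
    using prob_one[OF that] unfolding ind_def P_def h_def by simp
  have E2: "measure_pmf.expectation P (\<lambda>X. ind i X * ind j X) = (if i = j then h else h^2)"
    if "i < n" "j < n" for i j
  proof (cases "i = j")
    case True
    have "(\<lambda>X. ind i X * ind j X) = ind i" using True by (auto simp: ind_def indicator_def)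
    thus ?thesis using E1[OF that(1)] True by simp
  next
    case False
    have "(\<lambda>X. ind i X * ind j X) = indicator {X. X i = y \<and> X j = y}"
      by (auto simp: ind_def indicator_def)
    thus ?thesis using prob_two[OF that False] False unfolding P_def h_def by simp
  qed
  define c where "c = (\<lambda>X. \<Sum>i<n. ind i X)"
  have hc: "h_obs n X y = c X / n" for X unfolding c_def ind_def by (rule h_obs_sum)
  have csq: "c X ^ 2 = (\<Sum>i<n. \<Sum>j<n. ind i X * ind j X)" for X
    unfolding c_def power2_eq_square sum_product ..
  have Ec: "measure_pmf.expectation P c = n * h"
    unfolding c_def using E1 by (subst Bochner_Integration.integral_sum) (auto intro: intb1)
  have Ec2: "measure_pmf.expectation P (\<lambda>X. c X ^ 2) = n * h + (real n * n - n) * h^2"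
  proof -
    have "measure_pmf.expectation P (\<lambda>X. c X ^ 2)
        = (\<Sum>i<n. \<Sum>j<n. measure_pmf.expectation P (\<lambda>X. ind i X * ind j X))"
      unfolding csq
      by (subst Bochner_Integration.integral_sum, use intb in \<open>auto intro!: Bochner_Integration.integrable_sum\<close>)
    also have "\<dots> = (\<Sum>i<n. \<Sum>j<n. h^2 + (if i = j then h - h^2 else 0))"
      by (intro sum.cong refl) (auto simp: E2)
    also have "\<dots> = (\<Sum>i<n. n * h^2 + (h - h^2))"
      by (intro sum.cong refl) (simp add: sum.distrib)
    also have "\<dots> = n * h + (real n * n - n) * h^2"
      by (simp add: algebra_simps power2_eq_square)
    finally show ?thesis .
  qed
  have feq: "(\<lambda>X. (h_obs n X y - pmf p y)^2) = (\<lambda>X. c X ^ 2 / n^2 - 2 * h / n * c X + h^2)"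
    using n by (auto simp: hc h_def power2_eq_square field_simps)
  have intc: "integrable (measure_pmf P) c"
    unfolding c_def by (intro Bochner_Integration.integrable_sum intb1)
  have intc2: "integrable (measure_pmf P) (\<lambda>X. c X ^ 2)"
    unfolding csq by (intro Bochner_Integration.integrable_sum intb)
  have "measure_pmf.expectation P (\<lambda>X. (h_obs n X y - pmf p y)^2)
     = measure_pmf.expectation P (\<lambda>X. c X ^ 2 / n^2 - 2 * h / n * c X + h^2)"
    by (simp only: feq)
  also have "\<dots> = measure_pmf.expectation P (\<lambda>X. c X ^ 2) / n^2 - 2 * h / n * measure_pmf.expectation P c + h^2"
    using intc intc2 by (simp add: Bochner_Integration.integral_add Bochner_Integration.integral_diff)
  also have "\<dots> = h * (1 - h) / n"
    unfolding Ec Ec2 using n by (simp add: field_simps power2_eq_square)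
  finally show ?thesis unfolding P_def h_def .
qed



lemma tail_eq: "ennreal (measure_pmf.prob p {K..}) = (\<Sum>x. ennreal (pmf p x * indicator {K..} (x::nat)))"
proof -
  have "ennreal (measure_pmf.prob p {K..}) = emeasure (measure_pmf p) {K..}"
    by (simp add: measure_pmf.emeasure_eq_measure)
  also have "\<dots> = (\<integral>\<^sup>+ x. indicator {K..} x \<partial>measure_pmf p)" by simp
  also have "\<dots> = (\<integral>\<^sup>+ x. ennreal (pmf p x) * indicator {K..} x \<partial>count_space UNIV)"
    by (rule nn_integral_measure_pmf)
  also have "\<dots> = (\<Sum>x. ennreal (pmf p x * indicator {K..} x))"
    by (simp add: nn_integral_count_space_nat ennreal_mult' ennreal_indicator)
  finally show ?thesis .
qed

lemma hobs_bounds: "0 < n \<Longrightarrow> 0 \<le> h_obs n X x \<and> h_obs n X x \<le> 1"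
proof -
  assume n: "0 < n"
  have "card {i. i < n \<and> X i = x} \<le> card {..<n}" by (intro card_mono) auto
  thus ?thesis using n unfolding h_obs_def by (auto simp: field_simps)
qed

lemma hobs_zero: "(\<And>i. i < n \<Longrightarrow> X i \<noteq> x) \<Longrightarrow> h_obs n X x = 0"
  unfolding h_obs_def by auto

lemma prob_comp:
  fixes p :: "nat pmf" and i n :: nat
  assumes "i < n"
  shows "measure_pmf.prob (Pi_pmf {..<n} 0 (\<lambda>_. p)) {X. X i \<in> A} = measure_pmf.prob p A"
proof -
  have "measure_pmf.prob (Pi_pmf {..<n} 0 (\<lambda>_. p)) {X. X i \<in> A}
      = measure_pmf.prob (map_pmf (\<lambda>f. f i) (Pi_pmf {..<n} 0 (\<lambda>_. p))) A"
    by (simp add: vimage_def)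
  also have "map_pmf (\<lambda>f. f i) (Pi_pmf {..<n} 0 (\<lambda>_. p)) = p"
    using assms by (simp add: Pi_pmf_component)
  finally show ?thesis .
qed

lemma main_prob:
  fixes p :: "nat pmf" and n K :: nat and t :: real
  assumes n: "n > 0" and t: "t > 0"
  shows "measure_pmf.prob (Pi_pmf {..<n} 0 (\<lambda>_. p))
           {X. chi2 (h_obs n X) (pmf p) \<le> ennreal (t + measure_pmf.prob p {K..})}
         \<ge> 1 - real n * measure_pmf.prob p {K..} - real K / (real n * t)"
proof -
  define P where "P = Pi_pmf {..<n} 0 (\<lambda>_. p)"
  define h where "h = pmf p"
  define tl where "tl = measure_pmf.prob p {K..}"
  define trm where "trm = (\<lambda>x X. if h x = 0 then 0 else (h_obs n X x - h x)^2 / h x)"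
  define T where "T = (\<lambda>X. \<Sum>x<K. trm x X)"
  define G where "G = {X. chi2 (h_obs n X) (pmf p) \<le> ennreal (t + tl)}"
  define B1 where "B1 = (\<Union>i\<in>{..<n}. {X. X i \<in> {K..}})"
  define B2 where "B2 = {X\<in>space (measure_pmf P). t \<le> T X}"
  have trm_nn: "0 \<le> trm x X" for x X unfolding trm_def h_def by auto
  have incl: "X \<in> G" if X: "X \<in> set_pmf P" "X \<notin> B1" "X \<notin> B2" for X
  proof -
    have Xs: "X i \<in> set_pmf p" if "i < n" for i
      using X(1) that unfolding P_def by (auto simp: set_Pi_pmf PiE_dflt_def)
    have XK: "X i < K" if "i < n" for i using X(2) that unfolding B1_def by (auto simp: not_le)
    have TX: "T X < t" using X(3) unfolding B2_def by auto
    define a where "a = (\<lambda>x. ennreal (if x < K then trm x X else 0))"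
    define b where "b = (\<lambda>x. ennreal (pmf p x * indicator {K..} x))"
    have gle: "(if h x = 0 then (if h_obs n X x = 0 then 0 else \<top>)
                    else ennreal ((h_obs n X x - h x)^2 / h x)) \<le> a x + b x" for x
    proof (cases "h x = 0")
      case True
      have "X i \<noteq> x" if "i < n" for i
        using Xs[OF that] True unfolding h_def by (auto simp: set_pmf_eq)
      hence "h_obs n X x = 0" by (rule hobs_zero)
      thus ?thesis using True by simp
    next
      case False
      show ?thesis
      proof (cases "x < K")
        case True
        thus ?thesis using False unfolding a_def trm_def by (simp add: add_increasing2)
      next
        case xK: False
        have "X i \<noteq> x" if "i < n" for i using XK[OF that] xK by auto
        hence "h_obs n X x = 0" by (rule hobs_zero)
        moreover have "(0 - h x)^2 / h x = h x" using False by (simp add: power2_eq_square)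
        ultimately show ?thesis using False xK unfolding b_def h_def a_def by simp
      qed
    qed
    have "chi2 (h_obs n X) (pmf p) \<le> (\<Sum>x. a x + b x)"
      unfolding chi2_def h_def[symmetric] by (intro suminf_le summableI gle)
    also have "\<dots> = (\<Sum>x. a x) + (\<Sum>x. b x)" by (rule suminf_add[symmetric]) auto
    also have "(\<Sum>x. a x) = (\<Sum>x<K. a x)" by (rule suminf_finite) (auto simp: a_def)
    also have "\<dots> = ennreal (T X)" unfolding a_def T_def using trm_nn by (simp add: sum_ennreal)
    also have "(\<Sum>x. b x) = ennreal tl" unfolding b_def tl_def by (rule tail_eq[symmetric])
    also have "ennreal (T X) + ennreal tl = ennreal (T X + tl)"
      using trm_nn by (intro ennreal_plus[symmetric]) (auto simp: T_def tl_def intro: sum_nonneg)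
    also have "\<dots> \<le> ennreal (t + tl)" using TX by (intro ennreal_leI) auto
    finally show ?thesis unfolding G_def by simp
  qed
  have pB1: "measure_pmf.prob P B1 \<le> real n * tl"
  proof -
    have "measure_pmf.prob P B1 \<le> (\<Sum>i<n. measure_pmf.prob P {X. X i \<in> {K..}})"
      unfolding B1_def by (rule measure_pmf.finite_measure_subadditive_finite) auto
    also have "\<dots> = (\<Sum>i<n. tl)" unfolding P_def tl_def by (intro sum.cong refl prob_comp) auto
    finally show ?thesis by simp
  qed
  have inttrm: "integrable (measure_pmf P) (trm x)" for x
  proof (rule pmf_integrable_bounded[where B="if h x = 0 then 0 else 1 / h x"])
    fix X
    have hx: "0 \<le> h x" "h x \<le> 1" unfolding h_def by (auto simp: pmf_le_1)
    have "(h_obs n X x - h x)^2 \<le> 1"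
      using hobs_bounds[OF n, of X x] hx by (intro power_le_one_iff[THEN iffD2] abs_square_le_1[THEN iffD2]) auto
    thus "\<bar>trm x X\<bar> \<le> (if h x = 0 then 0 else 1 / h x)"
      unfolding trm_def using hx by (auto intro: divide_right_mono)
  qed
  have Etrm: "measure_pmf.expectation P (trm x) \<le> 1 / n" for x
  proof (cases "h x = 0")
    case True thus ?thesis unfolding trm_def by simp
  next
    case False
    have "measure_pmf.expectation P (trm x) = measure_pmf.expectation P (\<lambda>X. (h_obs n X x - h x)^2) / h x"
      unfolding trm_def using False by simp
    also have "\<dots> = (1 - h x) / n"
      unfolding P_def h_def using var_hobs[OF n, of p x] False unfolding h_def by simp
    also have "\<dots> \<le> 1 / n" unfolding h_def by (intro divide_right_mono) auto
    finally show ?thesis .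
  qed
  have pB2: "measure_pmf.prob P B2 \<le> real K / (real n * t)"
  proof -
    have "measure_pmf.prob P B2 \<le> measure_pmf.expectation P T / t"
      unfolding B2_def T_def
      by (rule integral_Markov_inequality_measure[where A=UNIV])
         (use t trm_nn inttrm in \<open>auto intro!: Bochner_Integration.integrable_sum sum_nonneg\<close>)
    also have "measure_pmf.expectation P T = (\<Sum>x<K. measure_pmf.expectation P (trm x))"
      unfolding T_def by (rule Bochner_Integration.integral_sum) (use inttrm in auto)
    also have "\<dots> \<le> (\<Sum>x<K. 1 / n)" by (intro sum_mono Etrm)
    finally show ?thesis using t by (simp add: divide_right_mono field_simps)
  qed
  have "1 - measure_pmf.prob P G = measure_pmf.prob P (UNIV - G)"
    by (subst measure_pmf.prob_compl[symmetric]) auto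
  also have "\<dots> = measure_pmf.prob P ((UNIV - G) \<inter> set_pmf P)"
    by (rule measure_Int_set_pmf[symmetric])
  also have "\<dots> \<le> measure_pmf.prob P (B1 \<union> B2)"
    using incl by (intro measure_pmf.finite_measure_mono) auto
  also have "\<dots> \<le> measure_pmf.prob P B1 + measure_pmf.prob P B2"
    by (rule measure_Un_le) auto
  finally show ?thesis using pB1 pB2 unfolding P_def G_def tl_def by linarith
qed



lemma key_ineq:
  fixes a L D :: real
  assumes a: "exp 1 \<le> a" and L: "0 < L" and D: "D = exp (ln a / a * L)"
  shows "L \<le> a * D" and "1 \<le> D"
proof -
  have a0: "0 < a" using a by (metis exp_gt_zero less_le_trans)
  have la: "1 \<le> ln a" using a a0 by (metis ln_exp ln_le_cancel_iff exp_gt_zero)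
  have l0: "0 \<le> ln a" using la by simp
  have "ln a / a * L \<ge> 0" using l0 a0 L by simp
  thus "1 \<le> D" unfolding D by simp
  have "L / a \<le> ln a / a * L" using la a0 L by (simp add: field_simps)
  also have "\<dots> \<le> D" unfolding D using exp_ge_add_one_self[of "ln a / a * L"] \<open>ln a / a * L \<ge> 0\<close> by linarith
  finally show "L \<le> a * D" using a0 by (simp add: field_simps)
qed

theorem lemma2:
  fixes \<theta> :: real
  assumes "\<theta> > 0"
  shows "\<exists>C>0. \<exists>N. \<forall>n\<ge>N. \<forall>\<delta>::real. 0 < \<delta> \<and> \<delta> < 1 \<longrightarrow>
    (\<forall>Q :: real measure. prob_space Q \<and> sets Q = sets borel \<and> emeasure Q {0..\<theta>} = 1 \<longrightarrow>
      measure_pmf.prob (Pi_pmf {..<n} 0 (\<lambda>_. poisson_mix_pmf Q))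
        {X. chi2 (h_obs n X) (poisson_mix Q) \<le>
            ennreal (C * (1 / real n) * ln (real n) powr (\<theta> + 4)
                     * \<delta> powr (- 1 - ln (ln (real n)) / ln (real n)))}
      \<ge> 1 - \<delta>)"
proof -
  define A where "A = 2 * exp (exp 2 * \<theta>)"
  define C where "C = 4 + (2 * ln (2 * A) + 3)"
  have A2: "2 \<le> A" unfolding A_def using assms by simp
  have lnA: "0 \<le> ln (2 * A)" using A2 by simp
  have C0: "C > 0" unfolding C_def using lnA by simp
  define N where "N = nat \<lceil>exp (exp 1) :: real\<rceil>"
  show ?thesis
  proof (intro exI[of _ C] conjI C0 exI[of _ N] allI impI, elim conjE)
    fix n :: nat and \<delta> :: real and Q :: "real measure"
    assume nN: "N \<le> n" and d0: "0 < \<delta>" and d1: "\<delta> < 1"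
      and Q: "prob_space Q" "sets Q = sets borel" "emeasure Q {0..\<theta>} = 1"
    define p where "p = poisson_mix_pmf Q"
    have pmfp: "pmf p = poisson_mix Q" unfolding p_def using mix_facts(6)[OF Q assms] .
    have hb: "pmf p x \<le> \<theta> ^ x / fact x" for x unfolding pmfp using mix_facts(4)[OF Q assms] .
    have nbig: "exp (exp 1) \<le> real n"
    proof -
      have "real (nat \<lceil>exp (exp 1) :: real\<rceil>) \<le> real n" using nN unfolding N_def by (simp only: of_nat_le_iff)
      thus ?thesis using real_nat_ceiling_ge[of "exp (exp 1)"] by linarith
    qed
    have "1 < exp (exp (1::real))" by simp
    hence n1: "1 < real n" using nbig by linarith
    hence n0: "0 < n" by simp
    define a where "a = ln (real n)"
    have a: "exp 1 \<le> a"
    proof -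
      have "ln (exp (exp 1)) \<le> ln (real n)" using nbig n1 by (subst ln_le_cancel_iff) auto
      thus ?thesis unfolding a_def by simp
    qed
    have a1: "1 \<le> a" using a exp_ge_add_one_self[of "1::real"] by linarith
    define L where "L = - ln \<delta>"
    have L0: "0 < L" unfolding L_def using d0 d1 by simp
    define D where "D = exp (ln a / a * L)"
    have LaD: "L \<le> a * D" and D1: "1 \<le> D" using key_ineq[OF a L0 D_def] by auto
    define K where "K = nat \<lceil>ln (2 * n * A / \<delta>)\<rceil>"
    have "2 \<le> real n * A" using n1 A2 mult_mono[of 1 "real n" 2 A] by simp
    hence "\<delta> < 2 * n * A" using d1 by simp
    hence arg1: "1 < 2 * n * A / \<delta>" using d0 by (simp add: field_simps)
    have lnpos: "0 < ln (2 * n * A / \<delta>)" using arg1 by simp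
    have Klo: "ln (2 * n * A / \<delta>) \<le> real K" unfolding K_def by linarith
    have Khi: "real K \<le> ln (2 * n * A / \<delta>) + 1" unfolding K_def using lnpos by linarith
    have K0: "0 < real K" using Klo lnpos by linarith
    have lnexp: "ln (2 * n * A / \<delta>) = ln 2 + a + ln A + L"
      unfolding a_def L_def using n1 A2 d0 by (simp add: ln_div ln_mult)
    define tl where "tl = measure_pmf.prob p {K..}"
    have tl: "tl \<le> \<delta> / (2 * n)"
    proof -
      have "tl \<le> A * exp (- real K)" unfolding tl_def A_def using tail_bound[OF assms hb] by simp
      also have "\<dots> \<le> A * exp (- ln (2 * n * A / \<delta>))" using Klo A2 by (intro mult_left_mono) auto
      also have "\<dots> = \<delta> / (2 * n)" using arg1 A2 n1 d0 by (simp add: exp_minus field_simps)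
      finally show ?thesis .
    qed
    have tl0: "0 \<le> tl" unfolding tl_def by simp
    define t where "t = 2 * real K / (real n * \<delta>)"
    have t0: "0 < t" unfolding t_def using K0 n1 d0 by simp
    have main: "measure_pmf.prob (Pi_pmf {..<n} 0 (\<lambda>_. p))
           {X. chi2 (h_obs n X) (pmf p) \<le> ennreal (t + tl)} \<ge> 1 - real n * tl - real K / (real n * t)"
      unfolding tl_def by (rule main_prob[OF n0 t0])
    have e1: "real n * tl \<le> \<delta> / 2" using tl n1 by (simp add: field_simps)
    have e2: "real K / (real n * t) = \<delta> / 2" unfolding t_def using K0 n1 d0 by (simp add: field_simps)
    have bnd: "t + tl \<le> C * (1 / real n) * ln (real n) powr (\<theta> + 4)
                     * \<delta> powr (- 1 - ln (ln (real n)) / ln (real n))"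
    proof -
      have dp: "\<delta> powr (- 1 - ln (ln (real n)) / ln (real n)) = D / \<delta>"
        unfolding D_def a_def L_def powr_def using d0
        by (simp add: exp_diff exp_minus field_simps flip: exp_add)
      have apow: "a \<le> a powr (\<theta> + 4)"
        using powr_mono[of 1 "\<theta> + 4" a] a1 assms by simp
      have dd: "\<delta> * \<delta> \<le> 2" using d0 d1 mult_strict_mono[of \<delta> 1 \<delta> 1] by simp
      have "\<delta> / (2 * n) \<le> 1 / (real n * \<delta>)"
        using dd d0 n1 by (simp add: field_simps)
      hence "t + tl \<le> 2 * real K / (real n * \<delta>) + 1 / (real n * \<delta>)"
        unfolding t_def using tl by linarith
      also have "\<dots> = (2 * real K + 1) / (real n * \<delta>)" by (simp add: add_divide_distrib)
      finally have "t + tl \<le> (2 * real K + 1) / (real n * \<delta>)" .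
      also have "2 * real K + 1 \<le> 2 * a + 2 * L + (2 * ln (2 * A) + 3)"
        using Khi lnexp ln_mult[of 2 A] A2 by simp
      also have "\<dots> \<le> C * a * D"
      proof -
        have aD: "a \<le> a * D" using a1 D1 mult_left_mono[of 1 D a] by simp
        have aD1: "1 \<le> a * D" using a1 D1 mult_mono[of 1 a 1 D] by simp
        have cc: "(2 * ln (2 * A) + 3) \<le> (2 * ln (2 * A) + 3) * (a * D)"
          using aD1 lnA mult_left_mono[of 1 "a * D" "2 * ln (2 * A) + 3"] by simp
        have "C * a * D = 4 * (a * D) + (2 * ln (2 * A) + 3) * (a * D)"
          unfolding C_def by (simp add: algebra_simps)
        thus ?thesis using aD cc LaD by linarith
      qed
      also have "\<dots> \<le> C * a powr (\<theta> + 4) * D"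
        using C0 D1 apow by (intro mult_right_mono mult_left_mono) auto
      finally have "t + tl \<le> C * a powr (\<theta> + 4) * D / (real n * \<delta>)"
        using n1 d0 by (simp add: divide_right_mono)
      thus ?thesis unfolding dp a_def by (simp add: field_simps)
    qed
    have "1 - \<delta> \<le> measure_pmf.prob (Pi_pmf {..<n} 0 (\<lambda>_. p))
           {X. chi2 (h_obs n X) (pmf p) \<le> ennreal (t + tl)}"
      using main e1 e2 by linarith
    also have "\<dots> \<le> measure_pmf.prob (Pi_pmf {..<n} 0 (\<lambda>_. p))
        {X. chi2 (h_obs n X) (pmf p) \<le>
            ennreal (C * (1 / real n) * ln (real n) powr (\<theta> + 4)
                     * \<delta> powr (- 1 - ln (ln (real n)) / ln (real n)))}"
      using bnd by (intro measure_pmf.finite_measure_mono) (auto intro: order_trans ennreal_leI)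
    finally show "1 - \<delta> \<le> measure_pmf.prob (Pi_pmf {..<n} 0 (\<lambda>_. poisson_mix_pmf Q))
        {X. chi2 (h_obs n X) (poisson_mix Q) \<le>
            ennreal (C * (1 / real n) * ln (real n) powr (\<theta> + 4)
                     * \<delta> powr (- 1 - ln (ln (real n)) / ln (real n)))}"
      unfolding p_def pmfp[unfolded p_def] .
  qed
qed

end
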